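(* Let $n,p,q,c,d$ be nonnegative integers. Then \[ \sum_{k=0}^n \binom{p+k}{p}\binom{q+n-k}{q}\binom{k}{c}\binom{n-k}{d}H_{p+k} = \binom{n+p+q+1}{n-c-d}\binom{p+c}{c}\binom{q+d}{d}\bigl(H_{n+p+q+1}-H_{p+q+c+d+1}+H_{p+c}\bigr). \]
   Context: For a nonnegative integer $N$, $H_N=\sum_{j=1}^N \frac1j$ (so $H_0=0$). For integers $r$ and $j$, $\binom{r}{j}=\frac{r(r-1)\cdots(r-j+1)}{j!}$ if $j\ge 0$ and $\binom{r}{j}=0$ if $j<0$. *)

theory Defs
  imports "HOL-Analysis.Analysis"
begin

definition binom_int :: "nat \<Rightarrow> int \<Rightarrow> nat" where
  "binom_int r j = (if j < 0 then 0 else r choose nat j)"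

end

theory Submission imports Defs begin

lemma rstep:
  fixes a m s :: nat and h :: real
  assumes "a - m = Suc s"
  shows "real (Suc a choose Suc m) * (harm (Suc a) - harm (Suc s) + h)
       = real (a choose m) * (harm a - harm (Suc s) + h) + real (a choose Suc m) * (harm a - harm s + h)"
proof -
  have r: "(Suc a - Suc m) * (Suc a choose Suc m) = Suc a * (a choose Suc m)"
    using binomial_absorb_comp[of "Suc a" "Suc m"] by simp
  hence r': "real (Suc s) * real (Suc a choose Suc m) = real (Suc a) * real (a choose Suc m)"
    using assms by (metis diff_Suc_Suc of_nat_mult)
  have p: "real (Suc a choose Suc m) = real (a choose m) + real (a choose Suc m)" by simp
  define z where "z = real (Suc a choose Suc m)"
  define x where "x = real (a choose m)"
  define y where "y = real (a choose Suc m)"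
  have e1: "z / real (Suc a) = y / real (Suc s)"
    using r' unfolding z_def y_def by (simp add: field_simps)
  have zxy: "z = x + y" using p unfolding x_def y_def z_def .
  have "z * (harm (Suc a) - harm (Suc s) + h)
      = z * (harm a - harm s + h) + z / real (Suc a) - z / real (Suc s)"
    by (simp add: harm_Suc inverse_eq_divide algebra_simps)
  also have "\<dots> = z * (harm a - harm s + h) + y / real (Suc s) - z / real (Suc s)"
    using e1 by simp
  also have "\<dots> = x * (harm a - harm (Suc s) + h) + y * (harm a - harm s + h)"
    unfolding zxy by (simp add: harm_Suc inverse_eq_divide algebra_simps diff_divide_distrib add_divide_distrib)
  finally show ?thesis unfolding x_def y_def z_def .
qed

lemma core:
  fixes P :: nat
  shows "(\<Sum>j\<le>m. real ((P+j) choose P) * real ((Q+(m-j)) choose Q) * harm (P+j))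
       = real ((m+P+Q+1) choose m) * (harm (m+P+Q+1) - harm (P+Q+1) + harm P)"
proof (induction m arbitrary: Q)
  case 0
  then show ?case by simp
next
  case (Suc m)
  note IHm = Suc.IH
  show ?case
  proof (induction Q)
    case 0
    have "(\<Sum>j\<le>Suc m. real ((P+j) choose P) * real ((0+(Suc m-j)) choose 0) * harm (P+j))
       = (\<Sum>j\<le>m. real ((P+j) choose P) * real ((0+(m-j)) choose 0) * harm (P+j))
         + real ((P + Suc m) choose P) * harm (P + Suc m)" by simp
    also have "\<dots> = real ((m+P+0+1) choose m) * (harm (m+P+0+1) - harm (P+0+1) + harm P)
         + real ((P + Suc m) choose P) * harm (P + Suc m)" using IHm[of 0] by simp
    also have "\<dots> = real ((Suc m+P+0+1) choose Suc m) * (harm (Suc m+P+0+1) - harm (P+0+1) + harm P)"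
    proof -
      have "(P + Suc m) choose P = (m+P+1) choose Suc m"
        by (metis add.commute add_Suc_right binomial_symmetric le_add2 add_diff_cancel_left' add_Suc Suc_eq_plus1)
      moreover have "(m+P+1) - m = Suc P" by simp
      ultimately show ?thesis using rstep[of "m+P+1" m P "harm P"]
        by (simp add: algebra_simps)
    qed
    finally show ?case .
  next
    case (Suc Q)
    have "(\<Sum>j\<le>Suc m. real ((P+j) choose P) * real ((Suc Q+(Suc m-j)) choose Suc Q) * harm (P+j))
       = (\<Sum>j\<le>m. real ((P+j) choose P) * real ((Suc Q+(m-j)) choose Suc Q) * harm (P+j))
       + (\<Sum>j\<le>Suc m. real ((P+j) choose P) * real ((Q+(Suc m-j)) choose Q) * harm (P+j))"
    proof -
      have "(\<Sum>j\<le>m. real ((P+j) choose P) * real ((Suc Q+(Suc m-j)) choose Suc Q) * harm (P+j))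
          = (\<Sum>j\<le>m. real ((P+j) choose P) * real ((Suc Q+(m-j)) choose Suc Q) * harm (P+j))
          + (\<Sum>j\<le>m. real ((P+j) choose P) * real ((Q+(Suc m-j)) choose Q) * harm (P+j))"
        unfolding sum.distrib[symmetric]
      proof (rule sum.cong[OF refl])
        fix j assume "j \<in> {..m}"
        hence "Suc Q+(Suc m-j) = Suc (Q + (Suc m - j))" and "Q + (Suc m - j) = Suc Q + (m-j)" by auto
        thus "real ((P+j) choose P) * real ((Suc Q+(Suc m-j)) choose Suc Q) * harm (P+j)
          = real ((P+j) choose P) * real ((Suc Q+(m-j)) choose Suc Q) * harm (P+j)
          + real ((P+j) choose P) * real ((Q+(Suc m-j)) choose Q) * harm (P+j)"
          by (simp add: algebra_simps)
      qed
      thus ?thesis by simp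
    qed
    also have "\<dots> = real ((m+P+Suc Q+1) choose m) * (harm (m+P+Suc Q+1) - harm (P+Suc Q+1) + harm P)
       + real ((Suc m+P+Q+1) choose Suc m) * (harm (Suc m+P+Q+1) - harm (P+Q+1) + harm P)"
      using IHm[of "Suc Q"] Suc.IH by simp
    also have "\<dots> = real ((Suc m+P+Suc Q+1) choose Suc m) * (harm (Suc m+P+Suc Q+1) - harm (P+Suc Q+1) + harm P)"
    proof -
      have "(m+P+Q+2) - m = Suc (P+Q+1)" by simp
      from rstep[OF this, of "harm P"] show ?thesis by (simp add: algebra_simps)
    qed
    finally show ?case .
  qed
qed


lemma choose_trans3:
  fixes a b i :: nat
  shows "(a+(b+i) choose a) * (b+i choose b) = (a+b choose b) * (a+b+i choose (a+b))"
proof -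
  have 1: "(a+b+i choose (a+b)) * (a+b choose b) = (a+b+i choose b) * (a+i choose a)"
    using choose_mult[of b "a+b" "a+b+i"] by (simp add: add.commute add.left_commute)
  have 2: "(a+b+i choose (b+i)) * (b+i choose b) = (a+b+i choose b) * (a+i choose i)"
    using choose_mult[of b "b+i" "a+b+i"] by (simp add: add.commute add.left_commute)
  have 3: "a+(b+i) choose a = a+b+i choose (b+i)"
    using binomial_symmetric[of a "a+(b+i)"] by (simp add: add.assoc)
  have 4: "a+i choose i = a+i choose a"
    using binomial_symmetric[of a "a+i"] by simp
  show ?thesis using 1 2 3 4 by (simp add: mult.commute)
qed

theorem mainTheorem4:
  fixes n p q c d :: nat
  shows "(\<Sum>k=0..n. real ((p+k) choose p) * real ((q+n-k) choose q)
            * real (k choose c) * real ((n-k) choose d) * harm (p+k))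
       = real (binom_int (n+p+q+1) (int n - int c - int d)) * real ((p+c) choose c)
            * real ((q+d) choose d)
            * (harm (n+p+q+1) - harm (p+q+c+d+1) + harm (p+c))"
proof (cases "c + d \<le> n")
  case False
  have "(\<Sum>k=0..n. real ((p+k) choose p) * real ((q+n-k) choose q)
            * real (k choose c) * real ((n-k) choose d) * harm (p+k)) = 0"
  proof (rule sum.neutral, rule ballI)
    fix k assume "k \<in> {0..n}"
    show "real ((p+k) choose p) * real ((q+n-k) choose q)
            * real (k choose c) * real ((n-k) choose d) * harm (p+k) = (0::real)"
    proof (cases "k < c")
      case True then show ?thesis by simp
    next
      case False
      hence "n - k < d" using \<open>\<not> c + d \<le> n\<close> \<open>k \<in> {0..n}\<close> by auto
      then show ?thesis by simp
    qed
  qed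
  moreover have "binom_int (n+p+q+1) (int n - int c - int d) = 0"
    using False by (simp add: binom_int_def)
  ultimately show ?thesis by simp
next
  case True
  define m where "m = n - c - d"
  define f where "f k = real ((p+k) choose p) * real ((q+n-k) choose q)
            * real (k choose c) * real ((n-k) choose d) * (harm (p+k) :: real)" for k
  have bi: "binom_int (n+p+q+1) (int n - int c - int d) = (m + (p+c) + (q+d) + 1) choose m"
    using True by (simp add: binom_int_def m_def nat_diff_distrib add.assoc)
  have "(\<Sum>k=0..n. f k) = (\<Sum>k\<in>(\<lambda>j. c + j) ` {..m}. f k)"
  proof (rule sum.mono_neutral_right)
    show "(\<lambda>j. c + j) ` {..m} \<subseteq> {0..n}" using True by (auto simp: m_def)
    show "\<forall>i\<in>{0..n} - (\<lambda>j. c + j) ` {..m}. f i = 0"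
    proof
      fix k assume k: "k \<in> {0..n} - (\<lambda>j. c + j) ` {..m}"
      show "f k = 0"
      proof (cases "k < c")
        case True then show ?thesis by (simp add: f_def)
      next
        case False
        then obtain j where "k = c + j" using le_Suc_ex not_less by blast
        with k have "j > m" by auto
        hence "n - k < d" using \<open>k = c + j\<close> True k by (auto simp: m_def)
        then show ?thesis by (simp add: f_def)
      qed
    qed
  qed simp
  also have "\<dots> = (\<Sum>j\<le>m. f (c + j))"
    by (subst sum.reindex) (auto simp: inj_on_def)
  also have "\<dots> = (\<Sum>j\<le>m. real ((p+c) choose c) * real ((q+d) choose d) *
        (real ((p+c+j) choose (p+c)) * real (((q+d)+(m-j)) choose (q+d)) * harm ((p+c)+j)))"
  proof (rule sum.cong[OF refl])
    fix j assume "j \<in> {..m}"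
    hence j: "j \<le> m" by simp
    have nk: "n - (c+j) = d + (m - j)" "q + n - (c+j) = q + (d + (m-j))"
      using j True by (auto simp: m_def)
    have t1: "real (p+(c+j) choose p) * real (c+j choose c) = real ((p+c) choose c) * real ((p+c+j) choose (p+c))"
      using choose_trans3[of p c j] by (metis of_nat_mult)
    have t2: "real (q+(d+(m-j)) choose q) * real (d+(m-j) choose d) = real ((q+d) choose d) * real ((q+d)+(m-j) choose (q+d))"
      using choose_trans3[of q d "m-j"] by (metis of_nat_mult)
    have "f (c+j) = (real (p+(c+j) choose p) * real (c+j choose c)) *
         (real (q+(d+(m-j)) choose q) * real (d+(m-j) choose d)) * harm (p+(c+j))"
      unfolding f_def nk by (simp add: algebra_simps)
    also have "\<dots> = real ((p+c) choose c) * real ((q+d) choose d) *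
        (real ((p+c+j) choose (p+c)) * real (((q+d)+(m-j)) choose (q+d)) * harm ((p+c)+j))"
      unfolding t1 t2 by (simp add: algebra_simps)
    finally show "f (c+j) = real ((p+c) choose c) * real ((q+d) choose d) *
        (real ((p+c+j) choose (p+c)) * real (((q+d)+(m-j)) choose (q+d)) * harm ((p+c)+j))" .
  qed
  also have "\<dots> = real ((p+c) choose c) * real ((q+d) choose d) *
       (real ((m+(p+c)+(q+d)+1) choose m) * (harm (m+(p+c)+(q+d)+1) - harm ((p+c)+(q+d)+1) + harm (p+c)))"
    unfolding sum_distrib_left[symmetric] core[of "p+c" "q+d" m] ..
  finally have fin: "(\<Sum>k=0..n. f k) = real ((p+c) choose c) * real ((q+d) choose d) *
       (real ((m+(p+c)+(q+d)+1) choose m) * (harm (m+(p+c)+(q+d)+1) - harm ((p+c)+(q+d)+1) + harm (p+c)))" .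
  have eqn: "m+(p+c)+(q+d)+1 = n+p+q+1" using True by (simp add: m_def)
  show ?thesis using fin unfolding f_def bi eqn by (simp add: algebra_simps)
qed

end
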